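(* Let $M\in\mathbb{R}^{n\times n}$ be real symmetric with spectral decomposition $M=\sum_{i=1}^n\lambda_iu_iu_i^T$, $\lambda_1>\cdots>\lambda_n$ distinct, $u_i$ orthonormal. Let $p\in(0,1)$, let $Q$ be the random symmetric matrix with independent entries $Q_{ij}$ ($i\le j$) equal to $1/p$ with probability $p$ and $0$ otherwise, and $E=M\circ Q-M$. Let $R=\sum_{j\ne1}\frac{1}{\lambda_j-\lambda_1}u_ju_j^T$ be the reduced resolvent of $M$ associated with $u_1$. Let $w_1=u_1\circ u_1$, $\mathcal{M}=M\circ M$, and let $M_k$ denote the $k$-th column of $M$. Then $$\mathbb{E}\big[\|REu_1\|_2^2\big]\le\frac{1}{(\lambda_2-\lambda_1)^2}\,\frac{1-p}{p}\Big(\sum_{k=1}^nu_1(k)^2\|M_k\|_2^2-\Big[2w_1^T\mathcal{M}w_1-\sum_{k=1}^nw_1(k)^2\mathcal{M}_{kk}\Big]\Big).$$ Moreover, if $\lambda_1=\|M\|_2$, then $$\mathbb{E}\big[\|REu_1\|_2^2\big]\le\frac{1}{(1-\lambda_2/\lambda_1)^2}\|u_1\|_\infty^2\frac{\mathrm{NumRank}(M)}{p},$$ where $\mathrm{NumRank}(M)=\|M\|_F^2/\|M\|_2^2$.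
   Context: $\circ$ is the Hadamard product, $\|\cdot\|_F$ the Frobenius norm, $\|\cdot\|_2$ the spectral (resp. Euclidean) norm, $\|x\|_\infty=\max_i|x_i|$. *)

theory Defs
  imports "HOL-Probability.Probability"
begin

text \<open>Conventions: n x n matrices are functions nat => nat => real, only entries with
indices < n are meaningful; vectors are nat => real, coordinates 0..n-1.
Index shift: the paper's u_1, lambda_1, lambda_2 are u 0, lam 0, lam 1.\<close>

definition frob_sq :: "nat \<Rightarrow> (nat \<Rightarrow> nat \<Rightarrow> real) \<Rightarrow> real" where
  "frob_sq n A = (\<Sum>i<n. \<Sum>j<n. (A i j)\<^sup>2)"

definition vec_norm :: "nat \<Rightarrow> (nat \<Rightarrow> real) \<Rightarrow> real" where
  "vec_norm n x = sqrt (\<Sum>i<n. (x i)\<^sup>2)"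

definition mat_vec :: "nat \<Rightarrow> (nat \<Rightarrow> nat \<Rightarrow> real) \<Rightarrow> (nat \<Rightarrow> real) \<Rightarrow> (nat \<Rightarrow> real)" where
  "mat_vec n A x = (\<lambda>i. \<Sum>j<n. A i j * x j)"

definition spec_norm :: "nat \<Rightarrow> (nat \<Rightarrow> nat \<Rightarrow> real) \<Rightarrow> real" where
  "spec_norm n A = Sup {vec_norm n (mat_vec n A x) | x. vec_norm n x = 1}"

definition inf_norm :: "nat \<Rightarrow> (nat \<Rightarrow> real) \<Rightarrow> real" where
  "inf_norm n x = Max {\<bar>x i\<bar> | i. i < n}"

definition num_rank :: "nat \<Rightarrow> (nat \<Rightarrow> nat \<Rightarrow> real) \<Rightarrow> real" where
  "num_rank n A = frob_sq n A / (spec_norm n A)\<^sup>2"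

definition coin_pmf :: "nat \<Rightarrow> real \<Rightarrow> (nat \<times> nat \<Rightarrow> bool) pmf" where
  "coin_pmf n p = Pi_pmf {(i, j). i \<le> j \<and> j < n} False (\<lambda>_. bernoulli_pmf p)"

definition Qmat :: "real \<Rightarrow> (nat \<times> nat \<Rightarrow> bool) \<Rightarrow> nat \<Rightarrow> nat \<Rightarrow> real" where
  "Qmat p b i j = (if b (min i j, max i j) then 1 / p else 0)"

definition Emat :: "(nat \<Rightarrow> nat \<Rightarrow> real) \<Rightarrow> real \<Rightarrow> (nat \<times> nat \<Rightarrow> bool) \<Rightarrow> nat \<Rightarrow> nat \<Rightarrow> real" where
  "Emat M p b i j = M i j * Qmat p b i j - M i j"

definition red_resolvent :: "nat \<Rightarrow> (nat \<Rightarrow> real) \<Rightarrow> (nat \<Rightarrow> nat \<Rightarrow> real) \<Rightarrow> nat \<Rightarrow> nat \<Rightarrow> real" where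
  "red_resolvent n lam u k l = (\<Sum>j\<in>{1..<n}. 1 / (lam j - lam 0) * u j k * u j l)"

end

theory Submission
  imports Defs
begin


definition cA :: "nat \<Rightarrow> (nat \<times> nat) set" where
  "cA n = {(i, j). i \<le> j \<and> j < n}"

lemma finite_cA: "finite (cA n)"
  by (rule finite_subset[of _ "{..<n} \<times> {..<n}"]) (auto simp: cA_def)

lemma coin_fin: "finite (set_pmf (coin_pmf n p))"
proof -
  have "set_pmf (coin_pmf n p) \<subseteq> PiE_dflt (cA n) False (set_pmf \<circ> (\<lambda>_. bernoulli_pmf p))"
    unfolding coin_pmf_def cA_def[symmetric] by (rule set_Pi_pmf_subset'[OF finite_cA])
  moreover have "finite (PiE_dflt (cA n) False (set_pmf \<circ> (\<lambda>_. bernoulli_pmf p)))"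
    by (rule finite_PiE_dflt[OF finite_cA]) (rule finite_subset[of _ UNIV], auto)
  ultimately show ?thesis by (rule finite_subset)
qed

lemma coin_int: "integrable (measure_pmf (coin_pmf n p)) (f :: _ \<Rightarrow> real)"
  by (rule integrable_measure_pmf_finite[OF coin_fin])

lemma E_pair:
  assumes p: "0 < p" "p < 1" and a: "a \<in> cA n" and c: "c \<in> cA n"
  shows "measure_pmf.expectation (coin_pmf n p) (\<lambda>b. of_bool (b a) * of_bool (b c))
         = (if a = c then p else p * p)"
proof -
  let ?h = "\<lambda>x (v::bool). if x \<in> {a, c} then (of_bool v :: real) else 1"
  have eq: "(\<lambda>b. of_bool (b a) * of_bool (b c)) = (\<lambda>b. \<Prod>x\<in>cA n. ?h x (b x))"
  proof
    fix b :: "nat \<times> nat \<Rightarrow> bool"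
    have "(\<Prod>x\<in>cA n. ?h x (b x)) = (\<Prod>x\<in>cA n \<inter> {a, c}. (of_bool (b x) :: real))"
      by (subst prod.inter_restrict[OF finite_cA]) simp
    also have "cA n \<inter> {a, c} = {a, c}" using a c by auto
    also have "(\<Prod>x\<in>{a, c}. (of_bool (b x) :: real)) = of_bool (b a) * of_bool (b c)"
      by (cases "a = c") auto
    finally show "of_bool (b a) * of_bool (b c) = (\<Prod>x\<in>cA n. ?h x (b x))" by simp
  qed
  have "measure_pmf.expectation (coin_pmf n p) (\<lambda>b. \<Prod>x\<in>cA n. ?h x (b x))
        = (\<Prod>x\<in>cA n. measure_pmf.expectation (bernoulli_pmf p) (\<lambda>v. ?h x v))"
    unfolding coin_pmf_def cA_def[symmetric]
    by (rule expectation_prod_Pi_pmf[OF finite_cA])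
       (auto intro: integrable_measure_pmf_finite)
  also have "\<dots> = (\<Prod>x\<in>cA n. if x \<in> {a, c} then p else 1)"
    using p by (intro prod.cong) auto
  also have "\<dots> = (\<Prod>x\<in>cA n \<inter> {a, c}. p)"
    by (subst prod.inter_restrict[OF finite_cA]) simp
  also have "cA n \<inter> {a, c} = {a, c}" using a c by auto
  finally show ?thesis using eq by (cases "a = c") auto
qed

definition xi :: "real \<Rightarrow> (nat \<times> nat \<Rightarrow> bool) \<Rightarrow> nat \<times> nat \<Rightarrow> real" where
  "xi p b a = (if b a then 1 / p else 0) - 1"

lemma E_xixi:
  assumes p: "0 < p" "p < 1" and a: "a \<in> cA n" and c: "c \<in> cA n"
  shows "measure_pmf.expectation (coin_pmf n p) (\<lambda>b. xi p b a * xi p b c)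
         = (if a = c then (1 - p) / p else 0)"
proof -
  have eq: "(\<lambda>b. xi p b a * xi p b c) = (\<lambda>b. (1 / (p * p)) * (of_bool (b a) * of_bool (b c))
       - (1 / p) * (of_bool (b a) * of_bool (b a)) - (1 / p) * (of_bool (b c) * of_bool (b c)) + 1)"
    by (auto simp: xi_def fun_eq_iff field_simps)
  have Ea: "measure_pmf.expectation (coin_pmf n p) (\<lambda>b. of_bool (b a) * of_bool (b a)) = p"
    using E_pair[OF p a a] by simp
  have Ec: "measure_pmf.expectation (coin_pmf n p) (\<lambda>b. of_bool (b c) * of_bool (b c)) = p"
    using E_pair[OF p c c] by simp
  show ?thesis
    unfolding eq
    apply (subst Bochner_Integration.integral_add[OF coin_int coin_int])
    apply (subst Bochner_Integration.integral_diff[OF coin_int coin_int])+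
    apply (simp only: integral_mult_right_zero Ea Ec E_pair[OF p a c])
    using p by (auto simp: field_simps)
qed



lemma ortho_sq:
  fixes u :: "nat \<Rightarrow> nat \<Rightarrow> real"
  assumes orth: "\<forall>i<n. \<forall>j<n. (\<Sum>k<n. u i k * u j k) = (if i = j then 1 else 0)"
    and J: "J \<subseteq> {..<n}"
  shows "(\<Sum>k<n. (\<Sum>j\<in>J. a j * u j k)\<^sup>2) = (\<Sum>j\<in>J. (a j)\<^sup>2)"
proof -
  have fJ: "finite J" using J finite_subset by blast
  have "(\<Sum>k<n. (\<Sum>j\<in>J. a j * u j k)\<^sup>2) = (\<Sum>k<n. \<Sum>j\<in>J. \<Sum>j'\<in>J. a j * a j' * (u j k * u j' k))"
    by (simp add: power2_eq_square sum_product algebra_simps)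
  also have "\<dots> = (\<Sum>j\<in>J. \<Sum>j'\<in>J. a j * a j' * (\<Sum>k<n. u j k * u j' k))"
  proof -
    have "(\<Sum>k<n. \<Sum>j\<in>J. \<Sum>j'\<in>J. a j * a j' * (u j k * u j' k)) = (\<Sum>j\<in>J. \<Sum>k<n. \<Sum>j'\<in>J. a j * a j' * (u j k * u j' k))"
      by (rule sum.swap)
    also have "\<dots> = (\<Sum>j\<in>J. \<Sum>j'\<in>J. \<Sum>k<n. a j * a j' * (u j k * u j' k))"
      by (rule sum.cong[OF refl], rule sum.swap)
    finally show ?thesis by (simp only: sum_distrib_left)
  qed
  also have "\<dots> = (\<Sum>j\<in>J. \<Sum>j'\<in>J. a j * a j' * (if j = j' then 1 else 0))"
  proof (intro sum.cong refl)
    fix j j' assume "j \<in> J" "j' \<in> J"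
    then have "j < n" "j' < n" using J by auto
    then show "a j * a j' * (\<Sum>k<n. u j k * u j' k) = a j * a j' * (if j = j' then 1 else 0)"
      using orth by simp
  qed
  also have "\<dots> = (\<Sum>j\<in>J. (a j)\<^sup>2)"
    by (simp add: fJ power2_eq_square if_distrib cong: if_cong)
  finally show ?thesis .
qed

lemma bessel:
  fixes u :: "nat \<Rightarrow> nat \<Rightarrow> real"
  assumes orth: "\<forall>i<n. \<forall>j<n. (\<Sum>k<n. u i k * u j k) = (if i = j then 1 else 0)"
  shows "(\<Sum>j<n. (\<Sum>k<n. u j k * v k)\<^sup>2) \<le> (\<Sum>k<n. (v k)\<^sup>2)"
proof -
  define c where "c j = (\<Sum>k<n. u j k * v k)" for j
  have "0 \<le> (\<Sum>k<n. (v k - (\<Sum>j<n. c j * u j k))\<^sup>2)" by (rule sum_nonneg) simp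
  also have "\<dots> = (\<Sum>k<n. (v k)\<^sup>2) - 2 * (\<Sum>k<n. v k * (\<Sum>j<n. c j * u j k))
                 + (\<Sum>k<n. (\<Sum>j<n. c j * u j k)\<^sup>2)"
  proof -
    have "\<And>k. (v k - (\<Sum>j<n. c j * u j k))\<^sup>2 = (v k)\<^sup>2 - 2 * (v k * (\<Sum>j<n. c j * u j k)) + (\<Sum>j<n. c j * u j k)\<^sup>2"
      by (simp add: power2_diff)
    then show ?thesis by (simp only: sum.distrib sum_subtractf sum_distrib_left[symmetric])
  qed
  also have "(\<Sum>k<n. (\<Sum>j<n. c j * u j k)\<^sup>2) = (\<Sum>j<n. (c j)\<^sup>2)"
    by (rule ortho_sq[OF orth]) simp
  also have "(\<Sum>k<n. v k * (\<Sum>j<n. c j * u j k)) = (\<Sum>j<n. (c j)\<^sup>2)"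
  proof -
    have "(\<Sum>k<n. v k * (\<Sum>j<n. c j * u j k)) = (\<Sum>k<n. \<Sum>j<n. c j * (u j k * v k))"
      by (simp only: sum_distrib_left mult.commute mult.left_commute)
    also have "\<dots> = (\<Sum>j<n. \<Sum>k<n. c j * (u j k * v k))" by (rule sum.swap)
    also have "\<dots> = (\<Sum>j<n. (c j)\<^sup>2)" by (simp only: sum_distrib_left[symmetric] c_def power2_eq_square)
    finally show ?thesis .
  qed
  finally show ?thesis unfolding c_def by simp
qed



lemma resolvent_bound:
  fixes u :: "nat \<Rightarrow> nat \<Rightarrow> real" and lam :: "nat \<Rightarrow> real"
  assumes n2: "n \<ge> 2"
    and orth: "\<forall>i<n. \<forall>j<n. (\<Sum>k<n. u i k * u j k) = (if i = j then 1 else 0)"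
    and dd: "\<forall>i j. i < j \<and> j < n \<longrightarrow> lam j < lam i"
  shows "(vec_norm n (mat_vec n (red_resolvent n lam u) v))\<^sup>2
     \<le> 1 / (lam 1 - lam 0)\<^sup>2 * ((\<Sum>k<n. (v k)\<^sup>2) - (\<Sum>k<n. u 0 k * v k)\<^sup>2)"
proof -
  define c where "c j = (\<Sum>l<n. u j l * v l)" for j
  define d where "d j = 1 / (lam j - lam 0)" for j
  define K where "K = 1 / (lam 1 - lam 0)\<^sup>2"
  have mv: "mat_vec n (red_resolvent n lam u) v k = (\<Sum>j\<in>{1..<n}. (d j * c j) * u j k)" for k
  proof -
    have "mat_vec n (red_resolvent n lam u) v k = (\<Sum>l<n. \<Sum>j\<in>{1..<n}. d j * u j k * (u j l * v l))"
      by (simp add: mat_vec_def red_resolvent_def sum_distrib_right d_def mult.assoc)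
    also have "\<dots> = (\<Sum>j\<in>{1..<n}. \<Sum>l<n. d j * u j k * (u j l * v l))" by (rule sum.swap)
    also have "\<dots> = (\<Sum>j\<in>{1..<n}. (d j * c j) * u j k)"
      by (intro sum.cong refl) (simp add: c_def sum_distrib_left sum_distrib_right ac_simps)
    finally show ?thesis .
  qed
  have "(vec_norm n (mat_vec n (red_resolvent n lam u) v))\<^sup>2
        = (\<Sum>k<n. (mat_vec n (red_resolvent n lam u) v k)\<^sup>2)"
    unfolding vec_norm_def by (simp add: sum_nonneg)
  also have "\<dots> = (\<Sum>j\<in>{1..<n}. (d j * c j)\<^sup>2)"
    unfolding mv by (rule ortho_sq[OF orth]) auto
  also have "\<dots> \<le> (\<Sum>j\<in>{1..<n}. K * (c j)\<^sup>2)"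
  proof (rule sum_mono)
    fix j assume j: "j \<in> {1..<n}"
    have l10: "lam 1 < lam 0" using dd n2 by auto
    have "lam j \<le> lam 1" proof (cases "j = 1")
      case False then have "1 < j" "j < n" using j by auto
      then show ?thesis using dd by (metis less_imp_le)
    qed simp
    then have "(lam 0 - lam 1)\<^sup>2 \<le> (lam 0 - lam j)\<^sup>2" using l10
      by (intro power_mono) auto
    then have "(lam 1 - lam 0)\<^sup>2 \<le> (lam j - lam 0)\<^sup>2" by (simp add: power2_commute)
    moreover have "0 < (lam 1 - lam 0)\<^sup>2" using l10 by simp
    moreover have "0 < (lam j - lam 0)\<^sup>2" using \<open>lam j \<le> lam 1\<close> l10 by simp
    ultimately have "1 / (lam j - lam 0)\<^sup>2 \<le> K" unfolding K_def
      by (intro divide_left_mono) auto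
    then show "(d j * c j)\<^sup>2 \<le> K * (c j)\<^sup>2"
    proof -
      have "(d j * c j)\<^sup>2 = 1 / (lam j - lam 0)\<^sup>2 * (c j)\<^sup>2"
        unfolding d_def by (simp add: power_mult_distrib power_divide)
      also have "\<dots> \<le> K * (c j)\<^sup>2" using \<open>1 / (lam j - lam 0)\<^sup>2 \<le> K\<close> by (rule mult_right_mono) simp
      finally show ?thesis .
    qed
  qed
  also have "\<dots> = K * ((\<Sum>j<n. (c j)\<^sup>2) - (c 0)\<^sup>2)"
  proof -
    have "{..<n} = insert 0 {1..<n}" using n2 by auto
    then have "(\<Sum>j<n. (c j)\<^sup>2) = (c 0)\<^sup>2 + (\<Sum>j\<in>{1..<n}. (c j)\<^sup>2)" by simp
    then show ?thesis by (simp add: sum_distrib_left)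
  qed
  also have "\<dots> \<le> K * ((\<Sum>k<n. (v k)\<^sup>2) - (c 0)\<^sup>2)"
    using bessel[OF orth, of v] unfolding c_def K_def by (intro mult_left_mono) auto
  finally show ?thesis unfolding K_def c_def by simp
qed



definition pi2 :: "nat \<Rightarrow> nat \<Rightarrow> nat \<times> nat" where
  "pi2 i k = (min i k, max i k)"

lemma pi2_in: "i < n \<Longrightarrow> k < n \<Longrightarrow> pi2 i k \<in> cA n"
  by (auto simp: pi2_def cA_def)

lemma pi2_eq: "pi2 i k = pi2 i' k' \<longleftrightarrow> (i' = i \<and> k' = k) \<or> (i' = k \<and> k' = i)"
  by (auto simp: pi2_def min_def max_def split: if_splits)

lemma Emat_xi: "Emat M p b i k = M i k * xi p b (pi2 i k)"
  by (simp add: Emat_def Qmat_def xi_def pi2_def algebra_simps)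

lemma inner_pair:
  fixes h :: "nat \<Rightarrow> nat \<Rightarrow> real"
  assumes "i < n" "k < n"
  shows "(\<Sum>i'<n. \<Sum>k'<n. (if pi2 i k = pi2 i' k' then h i' k' else 0))
       = (if i = k then h i i else h i k + h k i)"
proof -
  have "(\<Sum>i'<n. \<Sum>k'<n. (if pi2 i k = pi2 i' k' then h i' k' else 0))
      = (\<Sum>i'<n. \<Sum>k'<n. (if k' = k then (if i' = i then h i' k' else 0) else 0)
          + (if k' = i then (if i' = k \<and> i \<noteq> k then h i' k' else 0) else 0))"
    by (intro sum.cong refl) (auto simp: pi2_eq)
  also have "\<dots> = (if i = k then h i i else h i k + h k i)"
    using assms by (simp add: sum.distrib)
  finally show ?thesis .
qed



lemma E_sum: fixes f :: "'a \<Rightarrow> (nat \<times> nat \<Rightarrow> bool) \<Rightarrow> real" shows "measure_pmf.expectation (coin_pmf n p) (\<lambda>b. \<Sum>x\<in>I. f x b)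
   = (\<Sum>x\<in>I. measure_pmf.expectation (coin_pmf n p) (f x))"
  by (rule Bochner_Integration.integral_sum) (rule coin_int)

lemma E_cmul: fixes f :: "(nat \<times> nat \<Rightarrow> bool) \<Rightarrow> real" shows "measure_pmf.expectation (coin_pmf n p) (\<lambda>b. c * f b)
   = c * measure_pmf.expectation (coin_pmf n p) f"
  by (rule integral_mult_right_zero)

lemma mv_E: "mat_vec n (Emat M p b) x i = (\<Sum>k<n. (M i k * x k) * xi p b (pi2 i k))"
  by (simp add: mat_vec_def Emat_xi ac_simps)

lemma EV:
  assumes p: "0 < p" "p < 1"
  shows "measure_pmf.expectation (coin_pmf n p) (\<lambda>b. \<Sum>i<n. (mat_vec n (Emat M p b) x i)\<^sup>2)
    = (1 - p) / p * (\<Sum>k<n. (x k)\<^sup>2 * (\<Sum>i<n. (M i k)\<^sup>2))"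
proof -
  have pw: "(\<lambda>b. \<Sum>i<n. (mat_vec n (Emat M p b) x i)\<^sup>2) = (\<lambda>b. \<Sum>i<n. \<Sum>k<n. \<Sum>k'<n.
     (M i k * x k * (M i k' * x k')) * (xi p b (pi2 i k) * xi p b (pi2 i k')))"
    by (simp add: mv_E power2_eq_square sum_product ac_simps)
  have "measure_pmf.expectation (coin_pmf n p) (\<lambda>b. \<Sum>i<n. (mat_vec n (Emat M p b) x i)\<^sup>2)
     = (\<Sum>i<n. \<Sum>k<n. \<Sum>k'<n. (M i k * x k * (M i k' * x k')) *
          measure_pmf.expectation (coin_pmf n p) (\<lambda>b. xi p b (pi2 i k) * xi p b (pi2 i k')))"
    unfolding pw by (simp only: E_sum E_cmul)
  also have "\<dots> = (\<Sum>i<n. \<Sum>k<n. \<Sum>k'<n. (M i k * x k * (M i k' * x k')) *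
          (if k' = k then (1 - p) / p else 0))"
    by (intro sum.cong refl, simp only: E_xixi[OF p pi2_in pi2_in] lessThan_iff)
       (auto simp: pi2_eq)
  also have "\<dots> = (\<Sum>i<n. \<Sum>k<n. (1 - p) / p * ((x k)\<^sup>2 * (M i k)\<^sup>2))"
    by (simp add: power2_eq_square ac_simps if_distrib[of "\<lambda>y. _ * y"] cong: if_cong)
  also have "\<dots> = (1 - p) / p * (\<Sum>k<n. (x k)\<^sup>2 * (\<Sum>i<n. (M i k)\<^sup>2))"
  proof -
    have "(\<Sum>i<n. \<Sum>k<n. (1 - p) / p * ((x k)\<^sup>2 * (M i k)\<^sup>2)) = (\<Sum>k<n. \<Sum>i<n. (1 - p) / p * ((x k)\<^sup>2 * (M i k)\<^sup>2))"
      by (rule sum.swap)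
    then show ?thesis by (simp only: sum_distrib_left)
  qed
  finally show ?thesis .
qed



lemma EW:
  assumes p: "0 < p" "p < 1" and symm: "\<forall>i<n. \<forall>j<n. M i j = M j i"
  shows "measure_pmf.expectation (coin_pmf n p) (\<lambda>b. (\<Sum>i<n. x i * mat_vec n (Emat M p b) x i)\<^sup>2)
    = (1 - p) / p * (2 * (\<Sum>k<n. \<Sum>l<n. (x k)\<^sup>2 * (M k l * M k l) * (x l)\<^sup>2)
               - (\<Sum>k<n. ((x k)\<^sup>2)\<^sup>2 * (M k k * M k k)))"
proof -
  define h where "h i k = x i * M i k * x k" for i k
  have hs: "i < n \<Longrightarrow> k < n \<Longrightarrow> h k i = h i k" for i k
    using symm by (simp add: h_def)
  have lin: "(\<Sum>i<n. x i * mat_vec n (Emat M p b) x i) = (\<Sum>i<n. \<Sum>k<n. h i k * xi p b (pi2 i k))" for b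
    by (simp add: mv_E h_def sum_distrib_left ac_simps)
  have pw: "(\<lambda>b. (\<Sum>i<n. x i * mat_vec n (Emat M p b) x i)\<^sup>2) = (\<lambda>b. \<Sum>i<n. \<Sum>k<n. \<Sum>i'<n. \<Sum>k'<n.
     (h i k * h i' k') * (xi p b (pi2 i k) * xi p b (pi2 i' k')))"
  proof
    fix b
    let ?f = "\<lambda>i k. h i k * xi p b (pi2 i k)"
    have "(\<Sum>i<n. \<Sum>k<n. ?f i k)\<^sup>2 = (\<Sum>i<n. \<Sum>k<n. ?f i k * (\<Sum>i'<n. \<Sum>k'<n. ?f i' k'))"
      by (simp only: power2_eq_square sum_distrib_right)
    also have "\<dots> = (\<Sum>i<n. \<Sum>k<n. \<Sum>i'<n. \<Sum>k'<n. ?f i k * ?f i' k')"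
      by (simp only: sum_distrib_left)
    finally show "(\<Sum>i<n. x i * mat_vec n (Emat M p b) x i)\<^sup>2 = (\<Sum>i<n. \<Sum>k<n. \<Sum>i'<n. \<Sum>k'<n.
     (h i k * h i' k') * (xi p b (pi2 i k) * xi p b (pi2 i' k')))"
      unfolding lin by (simp add: ac_simps)
  qed
  have "measure_pmf.expectation (coin_pmf n p) (\<lambda>b. (\<Sum>i<n. x i * mat_vec n (Emat M p b) x i)\<^sup>2)
     = (\<Sum>i<n. \<Sum>k<n. \<Sum>i'<n. \<Sum>k'<n. (h i k * h i' k') *
          measure_pmf.expectation (coin_pmf n p) (\<lambda>b. xi p b (pi2 i k) * xi p b (pi2 i' k')))"
    unfolding pw by (simp only: E_sum E_cmul)
  also have "\<dots> = (\<Sum>i<n. \<Sum>k<n. \<Sum>i'<n. \<Sum>k'<n. (h i k * h i' k') *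
          (if pi2 i k = pi2 i' k' then (1 - p) / p else 0))"
    by (intro sum.cong refl, simp only: E_xixi[OF p pi2_in pi2_in] lessThan_iff)
  also have "\<dots> = (\<Sum>i<n. \<Sum>k<n. (1 - p) / p * (h i k *
          (\<Sum>i'<n. \<Sum>k'<n. (if pi2 i k = pi2 i' k' then h i' k' else 0))))"
    by (simp add: sum_distrib_left if_distrib[of "\<lambda>y. _ * y"] ac_simps cong: if_cong)
  also have "\<dots> = (\<Sum>i<n. \<Sum>k<n. (1 - p) / p * (2 * (h i k)\<^sup>2 - (if k = i then (h i i)\<^sup>2 else 0)))"
    by (intro sum.cong refl, simp only: inner_pair lessThan_iff) (auto simp: hs power2_eq_square)
  also have "\<dots> = (1 - p) / p * (2 * (\<Sum>i<n. \<Sum>k<n. (h i k)\<^sup>2) - (\<Sum>i<n. (h i i)\<^sup>2))"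
  proof -
    have d: "(\<Sum>i<n. \<Sum>k<n. (if k = i then (h i i)\<^sup>2 else 0)) = (\<Sum>i<n. (h i i)\<^sup>2)" by simp
    show ?thesis
      by (simp only: sum_distrib_left[symmetric] sum_subtractf d)
  qed
  also have "\<dots> = (1 - p) / p * (2 * (\<Sum>k<n. \<Sum>l<n. (x k)\<^sup>2 * (M k l * M k l) * (x l)\<^sup>2)
               - (\<Sum>k<n. ((x k)\<^sup>2)\<^sup>2 * (M k k * M k k)))"
    by (simp add: h_def power2_eq_square ac_simps)
  finally show ?thesis .
qed



lemma vn_L2: "vec_norm n y = L2_set y {..<n}"
  by (simp add: L2_set_def vec_norm_def)

lemma spec_bdd:
  "bdd_above {vec_norm n (mat_vec n M x) | x. vec_norm n x = 1}"
proof (rule bdd_aboveI[where M = "\<Sum>i<n. \<Sum>j<n. \<bar>M i j\<bar>"], clarify)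
  fix x assume x: "vec_norm n x = 1"
  have s1: "(\<Sum>i<n. (x i)\<^sup>2) = 1" using x unfolding vec_norm_def
    by (metis real_sqrt_eq_1_iff)
  have xj: "\<bar>x j\<bar> \<le> 1" if "j < n" for j
  proof -
    have "(x j)\<^sup>2 \<le> (\<Sum>i<n. (x i)\<^sup>2)"
      by (rule member_le_sum[where f = "\<lambda>i. (x i)\<^sup>2"]) (use that in auto)
    then show ?thesis using s1 by (simp add: abs_square_le_1)
  qed
  have "vec_norm n (mat_vec n M x) \<le> (\<Sum>i<n. \<bar>mat_vec n M x i\<bar>)"
    unfolding vn_L2 by (rule L2_set_le_sum_abs)
  also have "\<dots> \<le> (\<Sum>i<n. \<Sum>j<n. \<bar>M i j\<bar>)"
  proof (rule sum_mono)
    fix i assume "i \<in> {..<n}"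
    have "\<bar>mat_vec n M x i\<bar> \<le> (\<Sum>j<n. \<bar>M i j * x j\<bar>)"
      unfolding mat_vec_def by (rule sum_abs)
    also have "\<dots> \<le> (\<Sum>j<n. \<bar>M i j\<bar>)"
    proof (rule sum_mono)
      fix j assume "j \<in> {..<n}"
      then have "\<bar>x j\<bar> \<le> 1" using xj by auto
      then show "\<bar>M i j * x j\<bar> \<le> \<bar>M i j\<bar>"
        by (simp add: abs_mult mult_left_le)
    qed
    finally show "\<bar>mat_vec n M x i\<bar> \<le> (\<Sum>j<n. \<bar>M i j\<bar>)" .
  qed
  finally show "vec_norm n (mat_vec n M x) \<le> (\<Sum>i<n. \<Sum>j<n. \<bar>M i j\<bar>)" .
qed

lemma spec_ge_eig:
  fixes u :: "nat \<Rightarrow> nat \<Rightarrow> real"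
  assumes orth: "\<forall>i<n. \<forall>j<n. (\<Sum>k<n. u i k * u j k) = (if i = j then 1 else 0)"
    and spectral: "\<forall>k<n. \<forall>l<n. M k l = (\<Sum>i<n. lam i * u i k * u i l)"
    and m: "m < n"
  shows "\<bar>lam m\<bar> \<le> spec_norm n M"
proof -
  have mv: "mat_vec n M (u m) k = lam m * u m k" if k: "k < n" for k
  proof -
    have "mat_vec n M (u m) k = (\<Sum>l<n. \<Sum>i<n. lam i * u i k * (u i l * u m l))"
      unfolding mat_vec_def using spectral k by (simp add: sum_distrib_right mult.assoc)
    also have "\<dots> = (\<Sum>i<n. \<Sum>l<n. lam i * u i k * (u i l * u m l))" by (rule sum.swap)
    also have "\<dots> = (\<Sum>i<n. lam i * u i k * (if i = m then 1 else 0))"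
      using orth m by (simp add: sum_distrib_left[symmetric])
    also have "\<dots> = lam m * u m k" using m by (simp add: if_distrib[of "\<lambda>y. _ * y"] cong: if_cong)
    finally show ?thesis .
  qed
  have n1: "vec_norm n (u m) = 1"
    using orth m unfolding vec_norm_def by (simp add: power2_eq_square)
  have "vec_norm n (mat_vec n M (u m)) = sqrt ((lam m)\<^sup>2 * (\<Sum>k<n. (u m k)\<^sup>2))"
    unfolding vec_norm_def using mv by (simp add: power_mult_distrib sum_distrib_left)
  also have "\<dots> = \<bar>lam m\<bar>" using orth m by (simp add: power2_eq_square real_sqrt_mult)
  finally have "\<bar>lam m\<bar> = vec_norm n (mat_vec n M (u m))" by simp
  also have "\<dots> \<le> spec_norm n M"
    unfolding spec_norm_def using n1 by (intro cSup_upper spec_bdd) blast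
  finally show ?thesis .
qed



lemma inf_norm_ge: "k < n \<Longrightarrow> \<bar>x k\<bar> \<le> inf_norm n x"
proof -
  assume k: "k < n"
  have eq: "{\<bar>x i\<bar> | i. i < n} = (\<lambda>i. \<bar>x i\<bar>) ` {..<n}" by auto
  show ?thesis unfolding inf_norm_def eq by (rule Max_ge) (use k in auto)
qed

theorem theorem4:
  fixes n :: nat and M :: "nat \<Rightarrow> nat \<Rightarrow> real" and lam :: "nat \<Rightarrow> real"
    and u :: "nat \<Rightarrow> nat \<Rightarrow> real" and p :: real
  assumes n2: "n \<ge> 2"
    and symm: "\<forall>i<n. \<forall>j<n. M i j = M j i"
    and orthonormal: "\<forall>i<n. \<forall>j<n. (\<Sum>k<n. u i k * u j k) = (if i = j then 1 else 0)"
    and spectral: "\<forall>k<n. \<forall>l<n. M k l = (\<Sum>i<n. lam i * u i k * u i l)"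
    and distinct_desc: "\<forall>i j. i < j \<and> j < n \<longrightarrow> lam j < lam i"
    and p: "0 < p" "p < 1"
  shows "measure_pmf.expectation (coin_pmf n p)
           (\<lambda>b. (vec_norm n (mat_vec n (red_resolvent n lam u)
                    (mat_vec n (Emat M p b) (u 0))))\<^sup>2)
         \<le> 1 / (lam 1 - lam 0)\<^sup>2 * ((1 - p) / p) *
           ((\<Sum>k<n. (u 0 k)\<^sup>2 * (vec_norm n (\<lambda>i. M i k))\<^sup>2)
            - (2 * (\<Sum>k<n. \<Sum>l<n. (u 0 k)\<^sup>2 * (M k l * M k l) * (u 0 l)\<^sup>2)
               - (\<Sum>k<n. ((u 0 k)\<^sup>2)\<^sup>2 * (M k k * M k k))))
       \<and> (lam 0 = spec_norm n M \<longrightarrow>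
          measure_pmf.expectation (coin_pmf n p)
           (\<lambda>b. (vec_norm n (mat_vec n (red_resolvent n lam u)
                    (mat_vec n (Emat M p b) (u 0))))\<^sup>2)
          \<le> 1 / (1 - lam 1 / lam 0)\<^sup>2 * (inf_norm n (u 0))\<^sup>2 * (num_rank n M / p))"
proof -
  define K where "K = 1 / (lam 1 - lam 0)\<^sup>2"
  define \<sigma> where "\<sigma> = (1 - p) / p"
  define S where "S = (\<Sum>k<n. (u 0 k)\<^sup>2 * (\<Sum>i<n. (M i k)\<^sup>2))"
  define br where "br = 2 * (\<Sum>k<n. \<Sum>l<n. (u 0 k)\<^sup>2 * (M k l * M k l) * (u 0 l)\<^sup>2)
               - (\<Sum>k<n. ((u 0 k)\<^sup>2)\<^sup>2 * (M k k * M k k))"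
  define LHS where "LHS = measure_pmf.expectation (coin_pmf n p)
           (\<lambda>b. (vec_norm n (mat_vec n (red_resolvent n lam u)
                    (mat_vec n (Emat M p b) (u 0))))\<^sup>2)"
  have Kpos: "0 \<le> K" unfolding K_def by simp
  have spos: "0 \<le> \<sigma>" unfolding \<sigma>_def using p by simp
  have vnM: "(vec_norm n (\<lambda>i. M i k))\<^sup>2 = (\<Sum>i<n. (M i k)\<^sup>2)" for k
    unfolding vec_norm_def by (simp add: sum_nonneg)
  have "LHS \<le> measure_pmf.expectation (coin_pmf n p)
      (\<lambda>b. K * ((\<Sum>k<n. (mat_vec n (Emat M p b) (u 0) k)\<^sup>2)
               - (\<Sum>k<n. u 0 k * mat_vec n (Emat M p b) (u 0) k)\<^sup>2))"
    unfolding LHS_def K_def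
    by (rule integral_mono[OF coin_int coin_int])
       (rule resolvent_bound[OF n2 orthonormal distinct_desc])
  also have "\<dots> = K * (measure_pmf.expectation (coin_pmf n p)
               (\<lambda>b. \<Sum>k<n. (mat_vec n (Emat M p b) (u 0) k)\<^sup>2)
          - measure_pmf.expectation (coin_pmf n p)
               (\<lambda>b. (\<Sum>k<n. u 0 k * mat_vec n (Emat M p b) (u 0) k)\<^sup>2))"
    by (simp only: E_cmul Bochner_Integration.integral_diff[OF coin_int coin_int])
  also have "\<dots> = K * (\<sigma> * S - \<sigma> * br)"
    unfolding EV[OF p] EW[OF p symm] \<sigma>_def S_def br_def by (rule refl)
  also have "\<dots> = K * \<sigma> * (S - br)" by (simp add: algebra_simps)
  finally have part1: "LHS \<le> K * \<sigma> * (S - br)" .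
  have part2: "LHS \<le> 1 / (1 - lam 1 / lam 0)\<^sup>2 * (inf_norm n (u 0))\<^sup>2 * (num_rank n M / p)"
    if sn: "lam 0 = spec_norm n M"
  proof -
    have l10: "lam 1 < lam 0" using distinct_desc n2 by auto
    have "\<bar>lam 1\<bar> \<le> lam 0" using spec_ge_eig[OF orthonormal spectral, of 1] n2 sn by simp
    then have l0: "lam 0 \<noteq> 0" using l10 by auto
    define D where "D = (\<Sum>k<n. ((u 0 k)\<^sup>2)\<^sup>2 * (M k k * M k k))"
    have D0: "0 \<le> D" unfolding D_def by (intro sum_nonneg) simp
    have "D \<le> (\<Sum>k<n. \<Sum>l<n. (u 0 k)\<^sup>2 * (M k l * M k l) * (u 0 l)\<^sup>2)"
      unfolding D_def
    proof (rule sum_mono)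
      fix k assume k: "k \<in> {..<n}"
      have "((u 0 k)\<^sup>2)\<^sup>2 * (M k k * M k k) = (\<lambda>l. (u 0 k)\<^sup>2 * (M k l * M k l) * (u 0 l)\<^sup>2) k"
        by (simp add: power2_eq_square)
      also have "\<dots> \<le> (\<Sum>l<n. (u 0 k)\<^sup>2 * (M k l * M k l) * (u 0 l)\<^sup>2)"
        by (rule member_le_sum) (use k in auto)
      finally show "((u 0 k)\<^sup>2)\<^sup>2 * (M k k * M k k) \<le> (\<Sum>l<n. (u 0 k)\<^sup>2 * (M k l * M k l) * (u 0 l)\<^sup>2)" .
    qed
    then have br0: "0 \<le> br" unfolding br_def D_def[symmetric] using D0 by simp
    define I where "I = (inf_norm n (u 0))\<^sup>2"
    have "S \<le> (\<Sum>k<n. I * (\<Sum>i<n. (M i k)\<^sup>2))"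
      unfolding S_def
    proof (rule sum_mono)
      fix k assume "k \<in> {..<n}"
      then have "\<bar>u 0 k\<bar> \<le> inf_norm n (u 0)" by (intro inf_norm_ge) auto
      then have "(u 0 k)\<^sup>2 \<le> I" unfolding I_def
        by (metis abs_ge_zero power2_abs power_mono)
      then show "(u 0 k)\<^sup>2 * (\<Sum>i<n. (M i k)\<^sup>2) \<le> I * (\<Sum>i<n. (M i k)\<^sup>2)"
        by (intro mult_right_mono) (auto intro: sum_nonneg)
    qed
    also have "\<dots> = I * frob_sq n M"
      unfolding frob_sq_def sum_distrib_left[symmetric] by (subst sum.swap) simp
    finally have SI: "S \<le> I * frob_sq n M" .
    have IF0: "0 \<le> I * frob_sq n M" unfolding I_def frob_sq_def by (intro mult_nonneg_nonneg sum_nonneg) auto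
    have "LHS \<le> K * \<sigma> * (S - br)" by (rule part1)
    also have "\<dots> \<le> K * \<sigma> * S" using br0 Kpos spos by (intro mult_left_mono) auto
    also have "\<dots> \<le> K * \<sigma> * (I * frob_sq n M)" using SI Kpos spos by (intro mult_left_mono) auto
    also have "\<dots> \<le> K * (1 / p) * (I * frob_sq n M)"
      using IF0 Kpos p unfolding \<sigma>_def
      by (intro mult_right_mono mult_left_mono) (auto simp: divide_right_mono)
    also have "\<dots> = 1 / (1 - lam 1 / lam 0)\<^sup>2 * I * (num_rank n M / p)"
      unfolding K_def num_rank_def sn[symmetric] using l0 l10
      by (simp add: field_simps power2_eq_square)
    finally show ?thesis unfolding I_def .
  qed
  show ?thesis
    using part1 part2 unfolding LHS_def K_def \<sigma>_def S_def br_def vnM by simp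
qed

end
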